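(* Let $b$ be a positive real number, let $T=(V,E)$ be a tree with $|V|\ge3$, and let $\ell:V\to[0,1]$ satisfy $\sum_{v\in V}\ell(v)\le1$. For $v\in V$ let $L(v)$ be the set of leaves of $T$ adjacent to $v$, and suppose that $\ell(v)+\sum_{u\in L(v)}\ell(u)\ge |L(v)|/b$ for all $v\in V$. Then $T$ has at most $b$ leaves. *)

theory Defs
  imports Complex_Main
begin

definition simple_graph :: "'a set \<Rightarrow> ('a \<Rightarrow> 'a \<Rightarrow> bool) \<Rightarrow> bool" where
  "simple_graph V E \<longleftrightarrow> finite V \<and> (\<forall>u v. E u v \<longrightarrow> u \<in> V \<and> v \<in> V)
     \<and> (\<forall>u v. E u v \<longrightarrow> E v u) \<and> (\<forall>v. \<not> E v v)"

definition connected_graph :: "'a set \<Rightarrow> ('a \<Rightarrow> 'a \<Rightarrow> bool) \<Rightarrow> bool" where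
  "connected_graph V E \<longleftrightarrow> (\<forall>u\<in>V. \<forall>v\<in>V. E\<^sup>*\<^sup>* u v)"

definition is_cycle :: "('a \<Rightarrow> 'a \<Rightarrow> bool) \<Rightarrow> 'a list \<Rightarrow> bool" where
  "is_cycle E vs \<longleftrightarrow> length vs \<ge> 3 \<and> distinct vs
     \<and> (\<forall>i. Suc i < length vs \<longrightarrow> E (vs ! i) (vs ! Suc i))
     \<and> E (last vs) (hd vs)"

definition is_tree :: "'a set \<Rightarrow> ('a \<Rightarrow> 'a \<Rightarrow> bool) \<Rightarrow> bool" where
  "is_tree V E \<longleftrightarrow> simple_graph V E \<and> V \<noteq> {} \<and> connected_graph V E
     \<and> (\<nexists>vs. is_cycle E vs)"

definition degree :: "'a set \<Rightarrow> ('a \<Rightarrow> 'a \<Rightarrow> bool) \<Rightarrow> 'a \<Rightarrow> nat" where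
  "degree V E v = card {u \<in> V. E v u}"

definition leaves :: "'a set \<Rightarrow> ('a \<Rightarrow> 'a \<Rightarrow> bool) \<Rightarrow> 'a set" where
  "leaves V E = {v \<in> V. degree V E v = 1}"

definition leaf_nbrs :: "'a set \<Rightarrow> ('a \<Rightarrow> 'a \<Rightarrow> bool) \<Rightarrow> 'a \<Rightarrow> 'a set" where
  "leaf_nbrs V E v = {u \<in> leaves V E. E v u}"

end

theory Submission
  imports Defs
begin

lemma leaf_nbr_unique:
  assumes sg: "simple_graph V E" and "u \<in> leaves V E" "E u w"
  shows "{x\<in>V. E u x} = {w}"
proof -
  have c: "card {x\<in>V. E u x} = 1" using assms(2) by (simp add: leaves_def degree_def)
  have "w \<in> {x\<in>V. E u x}" using sg assms(3) by (simp add: simple_graph_def)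
  then show ?thesis using c by (metis card_1_singletonE singletonD)
qed

lemma no_adj_leaves:
  assumes t: "is_tree V E" and c3: "card V \<ge> 3"
    and u: "u \<in> leaves V E" and w: "w \<in> leaves V E" and e: "E u w"
  shows False
proof -
  have sg: "simple_graph V E" and con: "connected_graph V E" using t by (auto simp: is_tree_def)
  have ew: "E w u" using sg e by (simp add: simple_graph_def)
  have nu: "{x\<in>V. E u x} = {w}" using leaf_nbr_unique[OF sg u e] .
  have nw: "{x\<in>V. E w x} = {u}" using leaf_nbr_unique[OF sg w ew] .
  have uV: "u \<in> V" using u by (simp add: leaves_def)
  have cl: "x \<in> {u,w}" if "E\<^sup>*\<^sup>* u x" for x
    using that
  proof (induction rule: rtranclp_induct)
    case base then show ?case by simp
  next
    case (step y z)
    have zV: "z \<in> V" using sg step(2) by (simp add: simple_graph_def)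
    from step(3) show ?case
    proof
      assume "y = u" then have "z \<in> {x\<in>V. E u x}" using zV step(2) by simp
      then show ?thesis using nu by simp
    next
      assume "y \<in> {w}" then have "z \<in> {x\<in>V. E w x}" using zV step(2) by simp
      then show ?thesis using nw by simp
    qed
  qed
  have "V \<subseteq> {u,w}" using con uV cl by (auto simp: connected_graph_def)
  then have "card V \<le> card {u,w}" by (simp add: card_mono)
  also have "\<dots> \<le> 2" by (simp add: card_insert_le_m1)
  finally show False using c3 by simp
qed

theorem proposition10:
  fixes V :: "'a set" and E :: "'a \<Rightarrow> 'a \<Rightarrow> bool"
    and l :: "'a \<Rightarrow> real" and b :: real
  assumes "b > 0"
    and "is_tree V E"
    and "card V \<ge> 3"
    and "\<forall>v\<in>V. 0 \<le> l v \<and> l v \<le> 1"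
    and "(\<Sum>v\<in>V. l v) \<le> 1"
    and "\<forall>v\<in>V. l v + (\<Sum>u\<in>leaf_nbrs V E v. l u) \<ge> real (card (leaf_nbrs V E v)) / b"
  shows "real (card (leaves V E)) \<le> b"
proof -
  have sg: "simple_graph V E" using assms(2) by (auto simp: is_tree_def)
  have fin: "finite V" using sg by (simp add: simple_graph_def)
  define N where "N = V - leaves V E"
  have lV: "leaves V E \<subseteq> V" by (auto simp: leaves_def)
  have finN: "finite N" using fin by (simp add: N_def)
  have LsubV: "leaf_nbrs V E v \<subseteq> leaves V E" for v by (auto simp: leaf_nbrs_def)
  have finL: "finite (leaf_nbrs V E v)" for v
    using LsubV[of v] lV fin by (meson finite_subset)
  have U: "leaves V E = (\<Union>v\<in>N. leaf_nbrs V E v)"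
  proof
    show "leaves V E \<subseteq> (\<Union>v\<in>N. leaf_nbrs V E v)"
    proof
      fix u assume u: "u \<in> leaves V E"
      have "card {x\<in>V. E u x} = 1" using u by (simp add: leaves_def degree_def)
      then obtain w where w: "{x\<in>V. E u x} = {w}" by (meson card_1_singletonE)
      then have wV: "w \<in> V" and e: "E u w" by auto
      have "w \<notin> leaves V E" using no_adj_leaves[OF assms(2) assms(3) u _ e] by blast
      then have "w \<in> N" using wV by (simp add: N_def)
      moreover have "u \<in> leaf_nbrs V E w" using u e sg by (simp add: leaf_nbrs_def simple_graph_def)
      ultimately show "u \<in> (\<Union>v\<in>N. leaf_nbrs V E v)" by blast
    qed
  next
    show "(\<Union>v\<in>N. leaf_nbrs V E v) \<subseteq> leaves V E" using LsubV by blast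
  qed
  have disj: "\<forall>v\<in>N. \<forall>w\<in>N. v \<noteq> w \<longrightarrow> leaf_nbrs V E v \<inter> leaf_nbrs V E w = {}"
  proof (intro ballI impI)
    fix v w assume "v \<in> N" "w \<in> N" "v \<noteq> w"
    show "leaf_nbrs V E v \<inter> leaf_nbrs V E w = {}"
    proof (rule ccontr)
      assume "leaf_nbrs V E v \<inter> leaf_nbrs V E w \<noteq> {}"
      then obtain u where u: "u \<in> leaves V E" "E v u" "E w u" by (auto simp: leaf_nbrs_def)
      have "E u v" "E u w" using u sg by (auto simp: simple_graph_def)
      then have "{x\<in>V. E u x} = {v}" "{x\<in>V. E u x} = {w}"
        using leaf_nbr_unique[OF sg u(1)] by auto
      then show False using \<open>v \<noteq> w\<close> by auto
    qed
  qed
  have cardL: "card (leaves V E) = (\<Sum>v\<in>N. card (leaf_nbrs V E v))"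
    unfolding U using card_UN_disjoint[OF finN] finL disj by blast
  have sumL: "(\<Sum>u\<in>leaves V E. l u) = (\<Sum>v\<in>N. \<Sum>u\<in>leaf_nbrs V E v. l u)"
    unfolding U using sum.UNION_disjoint[OF finN] finL disj by blast
  have "real (card (leaves V E)) / b = (\<Sum>v\<in>N. real (card (leaf_nbrs V E v)) / b)"
    by (simp add: cardL sum_divide_distrib)
  also have "\<dots> \<le> (\<Sum>v\<in>N. l v + (\<Sum>u\<in>leaf_nbrs V E v. l u))"
    using assms(6) by (intro sum_mono) (auto simp: N_def)
  also have "\<dots> = (\<Sum>v\<in>N. l v) + (\<Sum>u\<in>leaves V E. l u)"
    by (simp add: sum.distrib sumL)
  also have "\<dots> = (\<Sum>v\<in>V. l v)"
  proof -
    have "V = N \<union> leaves V E" "N \<inter> leaves V E = {}" using lV by (auto simp: N_def)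
    then show ?thesis using fin sum.union_disjoint[OF finN, of "leaves V E" l]
      by (metis finite_Un)
  qed
  also have "\<dots> \<le> 1" by fact
  finally have "real (card (leaves V E)) / b \<le> 1" .
  then show ?thesis using assms(1) by (simp add: divide_le_eq)
qed

end
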